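(* Let $S=(s_1,s_2,\dots,s_k)$ be finitely many positive real numbers such that $\max S\le \sum S/(1+\pi/2)$. Then there exists a cyclic polygon (a polygon inscribed in a circle) with these edge lengths that contains the center of its circle. *)

theory Defs
  imports "HOL-Analysis.Analysis"
begin

text \<open>The plane is modelled as the complex numbers.  A cyclic polygon with k vertices
  (k given in order) inscribed in the circle with centre c and radius r: vertex i is
  c + r * cis (theta i), where the angles strictly increase and wind less than once
  around the circle (so the vertices are distinct and in cyclic order, i.e. the polygon
  is a simple convex polygon inscribed in the circle).  Edge i joins vertex i to vertex
  (i+1) mod k.\<close>

definition cyclic_polygon_vertex :: "complex \<Rightarrow> real \<Rightarrow> (nat \<Rightarrow> real) \<Rightarrow> nat \<Rightarrow> complex" where
  "cyclic_polygon_vertex c r theta i = c + complex_of_real r * cis (theta i)"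

definition inscribed_polygon :: "nat \<Rightarrow> complex \<Rightarrow> real \<Rightarrow> (nat \<Rightarrow> real) \<Rightarrow> bool" where
  "inscribed_polygon k c r theta \<longleftrightarrow>
     r > 0 \<and> (\<forall>i. Suc i < k \<longrightarrow> theta i < theta (Suc i)) \<and> theta (k - 1) < theta 0 + 2 * pi"

end

theory Submission
  imports Defs
begin


lemma chord: "cmod (cis b - cis a) = 2 * \<bar>sin ((b - a)/2)\<bar>"
proof -
  have "cmod (cis b - cis a)^2 = 2 - 2 * cos (b - a)"
  proof -
    have "cmod (cis b - cis a)^2 = (cos b - cos a)^2 + (sin b - sin a)^2"
      by (simp add: cmod_power2)
    also have "\<dots> = (sin b ^2 + cos b^2) + (sin a^2 + cos a^2) - 2 * (cos b * cos a + sin b * sin a)"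
      by (simp add: power2_eq_square algebra_simps)
    also have "\<dots> = 2 - 2 * cos (b - a)" by (simp add: cos_diff)
    finally show ?thesis .
  qed
  also have "cos (b - a) = 1 - 2 * sin ((b-a)/2)^2"
  proof -
    have e: "b - a = 2*((b-a)/2)" by simp
    have "cos (b - a) = cos (2*((b-a)/2))" by (subst e, rule refl)
    also have "\<dots> = 1 - 2 * sin ((b-a)/2)^2" by (rule cos_double_sin)
    finally show ?thesis .
  qed
  finally have "cmod (cis b - cis a)^2 = (2 * \<bar>sin ((b - a)/2)\<bar>)^2"
    by (simp add: power_mult_distrib)
  thus ?thesis by (rule power2_eq_imp_eq) auto
qed

lemma inner_cis: "inner a (cis t) = cmod a * cos (t - Arg a)"
proof -
  have "a = rcis (cmod a) (Arg a)" by (simp add: rcis_cmod_Arg)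
  hence "Re a = cmod a * cos (Arg a)" "Im a = cmod a * sin (Arg a)"
    by (metis Re_rcis, metis Im_rcis)
  thus ?thesis by (simp add: inner_complex_def cos_diff algebra_simps)
qed

lemma key_hull:
  fixes theta :: "nat \<Rightarrow> real"
  assumes "theta 0 = 0" "theta k = 2*pi" "k \<ge> 1" "r > 0"
    and gap: "\<forall>i<k. theta (Suc i) - theta i \<le> pi"
  shows "0 \<in> convex hull ((\<lambda>i. of_real r * cis (theta i)) ` {..<k})"
proof (rule ccontr)
  let ?V = "(\<lambda>i. of_real r * cis (theta i)) ` {..<k}"
  assume H: "0 \<notin> convex hull ?V"
  have "compact (convex hull ?V)"
    by (intro compact_convex_hull finite_imp_compact) auto
  then obtain a b where ab: "inner a 0 < b" "\<forall>x\<in>convex hull ?V. inner a x > b"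
    using separating_hyperplane_closed_point[OF convex_convex_hull compact_imp_closed H] by blast
  let ?\<beta> = "Arg a"
  have pos: "cos (theta j - ?\<beta>) > 0" if "j \<le> k" for j
  proof -
    have "cos (theta j' - ?\<beta>) > 0" if "j' < k" for j'
    proof -
      have "of_real r * cis (theta j') \<in> convex hull ?V"
        using that by (intro hull_inc) auto
      hence "inner a (of_real r * cis (theta j')) > 0" using ab by force
      hence "r * (cmod a * cos (theta j' - ?\<beta>)) > 0"
        by (metis inner_cis inner_scaleR_right scaleR_conv_of_real)
      thus ?thesis using \<open>r>0\<close>
        by (metis mult_pos_pos norm_ge_zero zero_less_mult_pos zero_less_mult_pos2 mult_eq_0_iff less_eq_real_def linorder_not_le order_less_irrefl)
    qed
    moreover have "cos (theta k - ?\<beta>) = cos (theta 0 - ?\<beta>)"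
      using assms(1,2) by (simp add: cos_diff)
    ultimately show ?thesis using that \<open>k\<ge>1\<close>
      by (metis le_neq_implies_less less_one less_le_trans not_less)
  qed
  define \<gamma> where "\<gamma> = ?\<beta> + pi"
  have g: "0 < \<gamma>" "\<gamma> \<le> 2*pi" using Arg_bounded[of a] by (auto simp: \<gamma>_def)
  define J where "J = {j. j < k \<and> theta j \<le> \<gamma>}"
  have "0 \<in> J" using g assms by (auto simp: J_def)
  have finJ: "finite J" by (auto simp: J_def)
  define i where "i = Max J"
  have iJ: "i \<in> J" using \<open>0\<in>J\<close> finJ i_def Max_in by blast
  have i1: "i < k" "theta i \<le> \<gamma>" using iJ by (auto simp: J_def)
  have i2: "\<gamma> \<le> theta (Suc i)"
  proof (cases "Suc i < k")
    case True
    hence "Suc i \<notin> J" using finJ i_def Max_ge[OF finJ] by (metis Suc_n_not_le_n)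
    thus ?thesis using True by (auto simp: J_def)
  next
    case False
    hence "Suc i = k" using i1 by simp
    thus ?thesis using g assms by simp
  qed
  have gi: "theta (Suc i) - theta i \<le> pi" using gap i1 by auto
  have c1: "cos (theta i - ?\<beta>) > 0" using pos i1 by simp
  have c2: "cos (theta (Suc i) - ?\<beta>) > 0" using pos i1 by simp
  have e1: "cos (theta i - ?\<beta>) = - cos (theta i - \<gamma>)"
  proof -
    have "theta i - ?\<beta> = (theta i - \<gamma>) + pi" by (simp add: \<gamma>_def)
    thus ?thesis by (simp only: cos_periodic_pi)
  qed
  have e2: "cos (theta (Suc i) - ?\<beta>) = - cos (theta (Suc i) - \<gamma>)"
  proof -
    have "theta (Suc i) - ?\<beta> = (theta (Suc i) - \<gamma>) + pi" by (simp add: \<gamma>_def)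
    thus ?thesis by (simp only: cos_periodic_pi)
  qed
  have "\<gamma> - theta i > pi/2"
  proof (rule ccontr)
    assume "\<not> ?thesis"
    hence "cos (theta i - \<gamma>) \<ge> 0" using i1 by (intro cos_ge_zero) auto
    thus False using c1 e1 by simp
  qed
  moreover have "theta (Suc i) - \<gamma> > pi/2"
  proof (rule ccontr)
    assume "\<not> ?thesis"
    hence "cos (theta (Suc i) - \<gamma>) \<ge> 0" using i2 by (intro cos_ge_zero) auto
    thus False using c2 e2 by simp
  qed
  ultimately show False using gi by simp
qed


theorem lemma11:
  fixes s :: "nat \<Rightarrow> real" and k :: nat
  assumes "k \<ge> 1"
    and "\<forall>i<k. s i > 0"
    and "Max (s ` {..<k}) \<le> (\<Sum>i<k. s i) / (1 + pi / 2)"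
  shows "\<exists>c r theta. inscribed_polygon k c r theta
           \<and> (\<forall>i<k. cmod (cyclic_polygon_vertex c r theta (Suc i mod k)
                           - cyclic_polygon_vertex c r theta i) = s i)
           \<and> c \<in> convex hull (cyclic_polygon_vertex c r theta ` {..<k})"
proof -
  define M where "M = Max (s ` {..<k})"
  have fin: "finite (s ` {..<k})" and ne: "s ` {..<k} \<noteq> {}" using assms(1) by (auto simp: lessThan_empty_iff)
  obtain m where m: "m < k" "s m = M" using Max_in[OF fin ne] M_def by auto
  have sle: "s i \<le> M" if "i < k" for i using Max_ge[OF fin] that M_def by auto
  have Mpos: "M > 0" using m assms(2) by force
  define S where "S = (\<Sum>i<k. s i)"
  have pi2: "1 + pi/2 > 0" using pi_gt_zero by linarith
  have MS: "M * (1 + pi/2) \<le> S" using assms(3) pi2 by (simp add: M_def S_def pos_le_divide_eq)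
  have k2: "k \<ge> 2"
  proof (rule ccontr)
    assume "\<not> k \<ge> 2"
    hence "k = 1" using assms(1) by simp
    hence "S = M" using m by (simp add: S_def)
    moreover have "M * (1 + pi/2) = M + M * (pi/2)" by (simp add: algebra_simps)
    moreover have "M * (pi/2) > 0" using Mpos pi_gt_zero by simp
    ultimately show False using MS by linarith
  qed
  define f where "f = (\<lambda>r. \<Sum>i<k. 2 * arcsin (s i / (2 * r)))"
  define R where "R = M / (2 * sin (pi / k))"
  have pk1: "0 < pi / k" using k2 pi_gt_zero by simp
  have pk2: "pi / k \<le> pi / 2" using k2 pi_gt_zero by (intro divide_left_mono) auto
  note pk = pk1 pk2
  have sinpos: "sin (pi / k) > 0" using pk pi_gt_zero by (intro sin_gt_zero) linarith+
  have sin1: "sin (pi / k) \<le> 1" by simp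
  have MR: "M / 2 \<le> R" unfolding R_def using sinpos sin1 Mpos
    by (intro divide_left_mono) auto
  have fR: "f R \<le> 2 * pi"
  proof -
    have "f R \<le> of_nat (card {..<k}) * (2 * (pi / k))"
      unfolding f_def
    proof (rule sum_bounded_above)
      fix i assume "i \<in> {..<k}"
      hence i: "0 < s i" "s i \<le> M" using assms(2) sle by auto
      have eq: "s i / (2 * R) = s i * sin (pi / k) / M" unfolding R_def
        using sinpos Mpos by (simp add: field_simps)
      have "s i * sin (pi / k) / M \<le> sin (pi / k)"
      proof -
        have "s i * sin (pi / k) \<le> M * sin (pi / k)" using i sinpos by (intro mult_right_mono) auto
        hence "s i * sin (pi / k) / M \<le> M * sin (pi / k) / M" using Mpos by (intro divide_right_mono) auto
        thus ?thesis using Mpos by simp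
      qed
      moreover have "0 \<le> s i * sin (pi / k) / M" using i sinpos Mpos
        by (intro divide_nonneg_pos mult_nonneg_nonneg) auto
      hence "- 1 \<le> s i * sin (pi / k) / M" by linarith
      ultimately have "arcsin (s i / (2 * R)) \<le> arcsin (sin (pi / k))"
        unfolding eq by (intro arcsin_le_arcsin) auto
      also have "\<dots> = pi / k" using pk by (intro arcsin_sin) auto
      finally show "2 * arcsin (s i / (2 * R)) \<le> 2 * (pi / k)" by simp
    qed
    also have "\<dots> = 2 * pi" using k2 by simp
    finally show ?thesis .
  qed
  have fM: "f (M / 2) \<ge> 2 * pi"
  proof -
    have a1: "arcsin (s i / M) \<ge> s i / M" if "i < k" for i
    proof -
      have x1: "0 \<le> s i / M" using that assms(2) Mpos by (intro divide_nonneg_pos) auto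
      have "s i / M \<le> M / M" using that sle Mpos by (intro divide_right_mono) auto
      hence x2: "s i / M \<le> 1" using Mpos by simp
      note x = x1 x2
      have "0 \<le> arcsin (s i / M)" using x arcsin_le_arcsin[of 0 "s i / M"] by simp
      hence "sin (arcsin (s i / M)) \<le> arcsin (s i / M)" by (rule sin_x_le_x)
      thus ?thesis using x by simp
    qed
    have "f (M / 2) = 2 * (\<Sum>i<k. arcsin (s i / M))"
      unfolding f_def by (simp add: sum_distrib_left)
    also have "(\<Sum>i<k. arcsin (s i / M)) = arcsin (s m / M) + (\<Sum>i\<in>{..<k} - {m}. arcsin (s i / M))"
      using m by (subst sum.remove[of _ m]) auto
    also have "arcsin (s m / M) = pi / 2" using m Mpos by simp
    also have "(\<Sum>i\<in>{..<k} - {m}. arcsin (s i / M)) \<ge> (\<Sum>i\<in>{..<k} - {m}. s i / M)"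
      by (intro sum_mono a1) auto
    moreover have "(\<Sum>i\<in>{..<k} - {m}. s i / M) = (S - M) / M"
    proof -
      have "S = s m + (\<Sum>i\<in>{..<k} - {m}. s i)" unfolding S_def
        using m by (subst sum.remove[of _ m]) auto
      thus ?thesis using m by (simp add: sum_divide_distrib[symmetric])
    qed
    moreover have "(S - M) / M \<ge> pi / 2"
    proof -
      have "M * (1 + pi/2) = M + pi/2 * M" by (simp add: algebra_simps)
      hence "pi/2 * M \<le> S - M" using MS by linarith
      thus ?thesis by (simp add: pos_le_divide_eq[OF Mpos])
    qed
    ultimately show ?thesis by (simp only: distrib_left)
  qed
  have cont: "continuous_on {M/2..R} f"
    unfolding f_def
  proof (intro continuous_on_sum ballI)
    fix i assume "i \<in> {..<k}"
    hence i: "0 < s i" "s i \<le> M" using assms(2) sle by auto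
    show "continuous_on {M/2..R} (\<lambda>r. 2 * arcsin (s i / (2 * r)))"
    proof (intro continuous_intros ballI conjI)
      fix r assume "r \<in> {M/2..R}"
      hence r: "M \<le> 2 * r" by auto
      thus "2 * r \<noteq> 0" using Mpos by auto
      have "0 \<le> s i / (2 * r)" using i r Mpos by (intro divide_nonneg_pos) auto
      thus "-1 \<le> s i / (2 * r)" by linarith
      show "s i / (2 * r) \<le> 1" using i r Mpos by (simp add: pos_divide_le_eq)
    qed
  qed
  obtain r where r: "M/2 \<le> r" "r \<le> R" "f r = 2 * pi"
    using IVT2'[of f R "2*pi" "M/2", OF fR fM MR cont] by auto
  have rpos: "r > 0" using r Mpos by simp
  define \<alpha> where "\<alpha> = (\<lambda>i. 2 * arcsin (s i / (2 * r)))"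
  define theta where "theta = (\<lambda>i. \<Sum>j<i. \<alpha> j)"
  have al: "0 < \<alpha> i \<and> \<alpha> i \<le> pi \<and> sin (\<alpha> i / 2) = s i / (2 * r)" if "i < k" for i
  proof -
    have x1: "0 < s i / (2 * r)" using that assms(2) rpos by simp
    have x2: "s i / (2 * r) \<le> 1" using that sle[of i] rpos r(1) by (simp add: pos_divide_le_eq)
    note x = x1 x2
    have "arcsin 0 < arcsin (s i / (2 * r))" using x by (intro arcsin_less_arcsin) auto
    moreover have "arcsin (s i / (2 * r)) \<le> pi/2" using x arcsin_bounded[of "s i / (2*r)"] by auto
    ultimately show ?thesis using x by (simp add: \<alpha>_def)
  qed
  have thS: "theta (Suc i) = theta i + \<alpha> i" for i by (simp add: theta_def)
  have th0: "theta 0 = 0" by (simp add: theta_def)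
  have thk: "theta k = 2 * pi" using r(3) by (simp add: theta_def f_def \<alpha>_def)
  have vert: "cyclic_polygon_vertex 0 r theta j = of_real r * cis (theta j)" for j
    by (simp add: cyclic_polygon_vertex_def)
  have vsuc: "cyclic_polygon_vertex 0 r theta (Suc i mod k) = of_real r * cis (theta (Suc i))"
    if "i < k" for i
  proof (cases "Suc i < k")
    case True thus ?thesis by (simp add: vert)
  next
    case False
    hence "Suc i = k" using that by simp
    thus ?thesis using thk th0 by (simp add: vert)
  qed
  show ?thesis
  proof (intro exI conjI)
    show "inscribed_polygon k 0 r theta"
      unfolding inscribed_polygon_def
    proof (intro conjI allI impI)
      show "0 < r" by fact
      fix i assume "Suc i < k" thus "theta i < theta (Suc i)" using al[of i] thS by simp
    next
      have "theta k = theta (k - 1) + \<alpha> (k - 1)" using thS[of "k-1"] assms(1) by simp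
      thus "theta (k - 1) < theta 0 + 2 * pi" using al[of "k-1"] assms(1) th0 thk by simp
    qed
    show "\<forall>i<k. cmod (cyclic_polygon_vertex 0 r theta (Suc i mod k)
                 - cyclic_polygon_vertex 0 r theta i) = s i"
    proof (intro allI impI)
      fix i assume i: "i < k"
      have "cmod (cyclic_polygon_vertex 0 r theta (Suc i mod k) - cyclic_polygon_vertex 0 r theta i)
          = cmod (of_real r * (cis (theta (Suc i)) - cis (theta i)))"
        unfolding vsuc[OF i] vert[of i] by (simp only: right_diff_distrib)
      also have "\<dots> = r * (2 * \<bar>sin (\<alpha> i / 2)\<bar>)"
        using rpos by (simp add: norm_mult chord thS)
      also have "\<dots> = s i" using al[OF i] rpos assms(2) i by (simp add: less_imp_le)
      finally show "cmod (cyclic_polygon_vertex 0 r theta (Suc i mod k)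
                 - cyclic_polygon_vertex 0 r theta i) = s i" .
    qed
    have "0 \<in> convex hull ((\<lambda>i. of_real r * cis (theta i)) ` {..<k})"
      using al thS by (intro key_hull th0 thk assms(1) rpos) auto
    thus "0 \<in> convex hull (cyclic_polygon_vertex 0 r theta ` {..<k})"
      by (simp add: vert)
  qed
qed

end
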